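(* Under the standing setting and assumptions (A1)–(A3) described in the context, assume $\mathcal A^\infty\cap\ker(\pi)=\{0\}$ (absence of scalable good deals). Then $\mathcal R(X)\neq\emptyset$ for every $X\in\mathcal X$.
   Context: Let $\mathcal X$ be a Hausdorff, first countable, locally convex topological vector space over $\mathbb R$, partially ordered by a partial order $\geq$ with positive cone $\mathcal X_+=\{X\in\mathcal X: X\geq 0\}$. Let $\mathcal M\subset\mathcal X$ be a vector subspace with $1<\dim\mathcal M<\infty$, carrying the relative topology, and let $\pi:\mathcal M\to\mathbb R$ be linear with $\ker(\pi)=\{Z\in\mathcal M:\pi(Z)=0\}$. Standing assumptions: (A1) there is $U\in\mathcal M\cap\mathcal X_+$ with $\pi(U)=1$; (A2) $\mathcal A\subsetneq\mathcal X$ is closed, contains $0$, and satisfies $\mathcal A+\mathcal X_+\subset\mathcal A$; (A3) the map $\rho(X)=\inf\{\pi(Z): Z\in\mathcal M,\ X+Z\in\mathcal A\}$ is finitely valued and continuous on $\mathcal X$. The optimal payoff map is $\mathcal R(X)=\{Z\in\mathcal M: X+Z\in\mathcal A,\ \pi(Z)=\rho(X)\}$. The asymptotic cone is $\mathcal A^\infty=\bigcap_{\varepsilon>0}\mathrm{cl}\{\lambda X:\lambda\in[0,\varepsilon],X\in\mathcal A\}$. *)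

theory Defs
  imports "HOL-Analysis.Analysis"
begin

text \<open>A real topological vector space whose topology is locally convex
  (Hausdorffness and first countability are imposed via type classes).\<close>
definition locally_convex_tvs :: "'a::{real_vector,topological_space} itself \<Rightarrow> bool" where
  "locally_convex_tvs _ \<longleftrightarrow>
     continuous_on UNIV (\<lambda>p::'a \<times> 'a. fst p + snd p) \<and>
     continuous_on UNIV (\<lambda>p::real \<times> 'a. fst p *\<^sub>R snd p) \<and>
     (\<forall>U::'a set. open U \<and> 0 \<in> U \<longrightarrow> (\<exists>V. open V \<and> convex V \<and> 0 \<in> V \<and> V \<subseteq> U))"

text \<open>Positive cone of the order ge (ge x y means x \<ge> y).\<close>
definition pos_cone :: "('a \<Rightarrow> 'a \<Rightarrow> bool) \<Rightarrow> 'a::zero set" where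
  "pos_cone ge = {x. ge x 0}"

definition rho :: "'a::real_vector set \<Rightarrow> 'a set \<Rightarrow> ('a \<Rightarrow> real) \<Rightarrow> 'a \<Rightarrow> real" where
  "rho A M \<pi> X = Inf {\<pi> Z | Z. Z \<in> M \<and> X + Z \<in> A}"

definition optimal_payoffs :: "'a::real_vector set \<Rightarrow> 'a set \<Rightarrow> ('a \<Rightarrow> real) \<Rightarrow> 'a \<Rightarrow> 'a set" where
  "optimal_payoffs A M \<pi> X = {Z \<in> M. X + Z \<in> A \<and> \<pi> Z = rho A M \<pi> X}"

definition asymptotic_cone :: "'a::{real_vector,topological_space} set \<Rightarrow> 'a set" where
  "asymptotic_cone A = (\<Inter>\<epsilon>\<in>{\<epsilon>::real. \<epsilon> > 0}.
      closure {l *\<^sub>R X | l X. l \<in> {0..\<epsilon>} \<and> X \<in> A})"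

end

theory Submission
  imports Defs
begin


lemma tend_add:
  fixes f g :: "'b \<Rightarrow> 'a::{real_vector,topological_space}"
  assumes c: "continuous_on UNIV (\<lambda>p::'a \<times> 'a. fst p + snd p)"
    and f: "(f \<longlongrightarrow> a) F" and g: "(g \<longlongrightarrow> b) F"
  shows "((\<lambda>x. f x + g x) \<longlongrightarrow> a + b) F"
  using continuous_on_tendsto_compose[OF c tendsto_Pair[OF f g]] by (simp add: o_def)

lemma tend_scale:
  fixes g :: "'b \<Rightarrow> 'a::{real_vector,topological_space}" and f :: "'b \<Rightarrow> real"
  assumes c: "continuous_on UNIV (\<lambda>p::real \<times> 'a. fst p *\<^sub>R snd p)"
    and f: "(f \<longlongrightarrow> a) F" and g: "(g \<longlongrightarrow> b) F"
  shows "((\<lambda>x. f x *\<^sub>R g x) \<longlongrightarrow> a *\<^sub>R b) F"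
  using continuous_on_tendsto_compose[OF c tendsto_Pair[OF f g]] by (simp add: o_def)

lemma tend_sum:
  fixes f :: "'c \<Rightarrow> 'b \<Rightarrow> 'a::{real_vector,topological_space}"
  assumes c: "continuous_on UNIV (\<lambda>p::'a \<times> 'a. fst p + snd p)"
    and T: "finite T" and f: "\<forall>i\<in>T. (f i \<longlongrightarrow> a i) F"
  shows "((\<lambda>x. \<Sum>i\<in>T. f i x) \<longlongrightarrow> (\<Sum>i\<in>T. a i)) F"
  using T f
proof (induction T rule: finite_induct)
  case empty then show ?case by simp
next
  case (insert j T)
  then show ?case by (simp add: tend_add[OF c])
qed

lemma BW_finite:
  fixes c :: "nat \<Rightarrow> 'c \<Rightarrow> real"
  assumes I: "finite I" and b: "\<forall>n. \<forall>i\<in>I. \<bar>c n i\<bar> \<le> K"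
  shows "\<exists>\<rho> d. strict_mono \<rho> \<and> (\<forall>i\<in>I. (\<lambda>n. c (\<rho> n) i) \<longlonglongrightarrow> d i)"
  using I b
proof (induction I rule: finite_induct)
  case empty
  then show ?case by (intro exI[of _ id] exI) (auto simp: strict_mono_def)
next
  case (insert j I)
  then obtain \<rho> d where r: "strict_mono \<rho>" "\<forall>i\<in>I. (\<lambda>n. c (\<rho> n) i) \<longlonglongrightarrow> d i" by auto
  have "bounded (range (\<lambda>n. c (\<rho> n) j))"
    using insert.prems by (intro boundedI[of _ K]) auto
  then obtain l \<rho>2 where r2: "strict_mono \<rho>2" "((\<lambda>n. c (\<rho> n) j) \<circ> \<rho>2) \<longlonglongrightarrow> l"
    using bounded_imp_convergent_subsequence by blast
  have "strict_mono (\<rho> \<circ> \<rho>2)" using r r2 strict_mono_o by blast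
  moreover have "\<forall>i\<in>insert j I. (\<lambda>n. c ((\<rho> \<circ> \<rho>2) n) i) \<longlonglongrightarrow> (d(j:=l)) i"
  proof
    fix i assume i: "i \<in> insert j I"
    show "(\<lambda>n. c ((\<rho> \<circ> \<rho>2) n) i) \<longlonglongrightarrow> (d(j:=l)) i"
    proof (cases "i = j")
      case True then show ?thesis using r2 by (simp add: o_def)
    next
      case False
      then have "i \<in> I" using i by auto
      then have "((\<lambda>n. c (\<rho> n) i) \<circ> \<rho>2) \<longlonglongrightarrow> d i" using r r2 LIMSEQ_subseq_LIMSEQ by blast
      then show ?thesis using False by (simp add: o_def)
    qed
  qed
  ultimately show ?case by blast
qed

lemma pi_sum:
  fixes \<pi> :: "'a::real_vector \<Rightarrow> real"
  assumes M: "subspace M" and \<pi>_add: "\<forall>Z\<in>M. \<forall>W\<in>M. \<pi> (Z + W) = \<pi> Z + \<pi> W"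
    and \<pi>_scale: "\<forall>Z\<in>M. \<forall>c::real. \<pi> (c *\<^sub>R Z) = c * \<pi> Z"
    and T: "finite T" "T \<subseteq> M"
  shows "\<pi> (\<Sum>v\<in>T. u v *\<^sub>R v) = (\<Sum>v\<in>T. u v * \<pi> v)"
  using T
proof (induction T rule: finite_induct)
  case empty
  have "\<pi> (0 *\<^sub>R 0) = 0 * \<pi> 0" using \<pi>_scale subspace_0[OF M] by blast
  then show ?case by simp
next
  case (insert j T)
  have "(\<Sum>v\<in>T. u v *\<^sub>R v) \<in> M" using insert M
    by (intro subspace_sum) (auto intro: subspace_scale)
  moreover have "u j *\<^sub>R j \<in> M" using insert M by (auto intro: subspace_scale)
  ultimately show ?case using insert \<pi>_add \<pi>_scale by simp
qed



theorem mainTheorem8: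
  fixes ge :: "'a::{real_vector, t2_space, first_countable_topology} \<Rightarrow> 'a \<Rightarrow> bool"
    and M A :: "'a set" and \<pi> :: "'a \<Rightarrow> real"
  assumes tvs: "locally_convex_tvs TYPE('a)"
    and po: "partial_order_on UNIV {(x, y). ge y x}"
    and M_sub: "subspace M"
    and M_fin: "\<exists>B. finite B \<and> M = span B"
    and M_dim: "dim M > 1"
    and \<pi>_add: "\<forall>Z\<in>M. \<forall>W\<in>M. \<pi> (Z + W) = \<pi> Z + \<pi> W"
    and \<pi>_scale: "\<forall>Z\<in>M. \<forall>c::real. \<pi> (c *\<^sub>R Z) = c * \<pi> Z"
    and A1: "\<exists>U\<in>M \<inter> pos_cone ge. \<pi> U = 1"
    and A2_proper: "A \<subset> UNIV"
    and A2_closed: "closed A"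
    and A2_zero: "0 \<in> A"
    and A2_mono: "\<forall>X\<in>A. \<forall>P\<in>pos_cone ge. X + P \<in> A"
    and A3_finite: "\<forall>X. {\<pi> Z | Z. Z \<in> M \<and> X + Z \<in> A} \<noteq> {} \<and>
                        bdd_below {\<pi> Z | Z. Z \<in> M \<and> X + Z \<in> A}"
    and A3_cont: "continuous_on UNIV (rho A M \<pi>)"
    and no_sgd: "asymptotic_cone A \<inter> {Z \<in> M. \<pi> Z = 0} = {0}"
  shows "\<forall>X. optimal_payoffs A M \<pi> X \<noteq> {}"
  proof
  fix X
  from tvs have cadd: "continuous_on UNIV (\<lambda>p::'a \<times> 'a. fst p + snd p)"
    and csc: "continuous_on UNIV (\<lambda>p::real \<times> 'a. fst p *\<^sub>R snd p)"
    unfolding locally_convex_tvs_def by auto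
  obtain B0 where B0: "finite B0" "M = span B0" using M_fin by blast
  obtain Bs where Bs: "Bs \<subseteq> B0" "independent Bs" "B0 \<subseteq> span Bs"
    using maximal_independent_subset by blast
  have fB: "finite Bs" using Bs B0 finite_subset by blast
  have MB: "M = span Bs" using Bs B0 span_mono[OF Bs(1)] span_minimal[OF Bs(3) subspace_span] by blast
  have BsM: "Bs \<subseteq> M" using MB span_superset by blast
  define S where "S = {\<pi> Z | Z. Z \<in> M \<and> X + Z \<in> A}"
  define r where "r = Inf S"
  have Sne: "S \<noteq> {}" and Sbdd: "bdd_below S" using A3_finite unfolding S_def by auto
  have "\<forall>n. \<exists>Z. Z \<in> M \<and> X + Z \<in> A \<and> \<pi> Z < r + inverse (real (Suc n))"
  proof
    fix n
    have "Inf S < r + inverse (real (Suc n))" unfolding r_def by simp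
    then obtain y where "y \<in> S" "y < r + inverse (real (Suc n))" using cInf_lessD[OF Sne] by blast
    then show "\<exists>Z. Z \<in> M \<and> X + Z \<in> A \<and> \<pi> Z < r + inverse (real (Suc n))"
      unfolding S_def by auto
  qed
  from choice[OF this] obtain Zs where Zs0: "\<forall>n. Zs n \<in> M \<and> X + Zs n \<in> A \<and> \<pi> (Zs n) < r + inverse (real (Suc n))"
    by blast
  then have Zs: "\<And>n. Zs n \<in> M" "\<And>n. X + Zs n \<in> A"
      "\<And>n. \<pi> (Zs n) < r + inverse (real (Suc n))" by auto
  have Zlow: "r \<le> \<pi> (Zs n)" for n
    unfolding r_def using Zs Sbdd by (intro cInf_lower) (auto simp: S_def)
  have "\<forall>n. \<exists>u. Zs n = (\<Sum>v\<in>Bs. u v *\<^sub>R v)"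
    using Zs(1) MB span_finite[OF fB] by auto
  from choice[OF this] obtain c where c0: "\<forall>n. Zs n = (\<Sum>v\<in>Bs. c n v *\<^sub>R v)" by blast
  then have c: "\<And>n. Zs n = (\<Sum>v\<in>Bs. c n v *\<^sub>R v)" by auto
  have piZ: "\<pi> (Zs n) = (\<Sum>v\<in>Bs. c n v * \<pi> v)" for n
    unfolding c using pi_sum[OF M_sub \<pi>_add \<pi>_scale fB BsM] by blast
  define s where "s n = 1 + (\<Sum>v\<in>Bs. \<bar>c n v\<bar>)" for n
  have cle: "\<bar>c n v\<bar> \<le> s n - 1" if "v \<in> Bs" for n v
    unfolding s_def using that fB by (simp add: member_le_sum[where f="\<lambda>v. \<bar>c n v\<bar>"])
  have s1: "s n \<ge> 1" for n unfolding s_def by (simp add: sum_nonneg)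
  show "optimal_payoffs A M \<pi> X \<noteq> {}"
  proof (cases "\<exists>K. \<forall>n. s n \<le> K")
    case True
    then obtain K where K: "\<And>n. s n \<le> K" by blast
    have "\<forall>n. \<forall>v\<in>Bs. \<bar>c n v\<bar> \<le> K" proof (intro allI ballI)
      fix n v assume "v \<in> Bs" then show "\<bar>c n v\<bar> \<le> K" using cle[of v n] K[of n] by linarith
    qed
    then obtain \<rho> d where rd: "strict_mono \<rho>" "\<forall>v\<in>Bs. (\<lambda>n. c (\<rho> n) v) \<longlonglongrightarrow> d v"
      using BW_finite[OF fB] by blast
    define Z where "Z = (\<Sum>v\<in>Bs. d v *\<^sub>R v)"
    have ZM: "Z \<in> M" unfolding Z_def MB by (auto intro: span_sum span_scale span_base)
    have "(\<lambda>n. Zs (\<rho> n)) \<longlonglongrightarrow> Z"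
    proof -
      have "\<forall>v\<in>Bs. (\<lambda>n. c (\<rho> n) v *\<^sub>R v) \<longlonglongrightarrow> d v *\<^sub>R v"
        using rd(2) tend_scale[OF csc _ tendsto_const] by blast
      then show ?thesis unfolding c Z_def by (rule tend_sum[OF cadd fB])
    qed
    then have "(\<lambda>n. X + Zs (\<rho> n)) \<longlonglongrightarrow> X + Z"
      by (rule tend_add[OF cadd tendsto_const])
    then have XZA: "X + Z \<in> A"
      using Zs(2) by (intro Lim_in_closed_set[OF A2_closed]) auto
    have piZ_Z: "\<pi> Z = (\<Sum>v\<in>Bs. d v * \<pi> v)"
      unfolding Z_def using pi_sum[OF M_sub \<pi>_add \<pi>_scale fB BsM] by blast
    have l1: "(\<lambda>n. \<pi> (Zs (\<rho> n))) \<longlonglongrightarrow> \<pi> Z"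
      unfolding piZ piZ_Z using rd(2) by (intro tendsto_sum tendsto_mult tendsto_const) auto
    have inv0: "(\<lambda>n. inverse (real (Suc (\<rho> n)))) \<longlonglongrightarrow> 0"
      using LIMSEQ_subseq_LIMSEQ[OF LIMSEQ_inverse_real_of_nat rd(1)] by (simp add: o_def)
    have "(\<lambda>n. \<pi> (Zs (\<rho> n))) \<longlonglongrightarrow> r"
    proof (rule tendsto_sandwich[of "\<lambda>n. r" _ _ "\<lambda>n. r + inverse (real (Suc (\<rho> n)))"])
      show "\<forall>\<^sub>F n in sequentially. r \<le> \<pi> (Zs (\<rho> n))" using Zlow by simp
      show "\<forall>\<^sub>F n in sequentially. \<pi> (Zs (\<rho> n)) \<le> r + inverse (real (Suc (\<rho> n)))"
        using Zs(3) by (simp add: less_imp_le)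
      show "(\<lambda>n. r) \<longlonglongrightarrow> r" by simp
      show "(\<lambda>n. r + inverse (real (Suc (\<rho> n)))) \<longlonglongrightarrow> r"
        using tendsto_add[OF tendsto_const inv0, of r] by simp
    qed
    then have "\<pi> Z = r" using l1 LIMSEQ_unique by blast
    then have "Z \<in> optimal_payoffs A M \<pi> X"
      unfolding optimal_payoffs_def rho_def using ZM XZA r_def S_def by simp
    then show ?thesis by blast
  next
    case False
    then have "\<forall>n. \<exists>m. real (Suc n) \<le> s m" by (meson not_le le_less)
    from choice[OF this] obtain \<sigma> where sig0: "\<forall>n. real (Suc n) \<le> s (\<sigma> n)" by blast
    then have sig: "\<And>n. real (Suc n) \<le> s (\<sigma> n)" by auto
    define e where "e n v = inverse (s (\<sigma> n)) * c (\<sigma> n) v" for n v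
    have "\<forall>n. \<forall>v\<in>Bs. \<bar>e n v\<bar> \<le> 1"
    proof (intro allI ballI)
      fix n v assume v: "v \<in> Bs"
      have sp: "s (\<sigma> n) > 0" using s1[of "\<sigma> n"] by simp
      have "\<bar>c (\<sigma> n) v\<bar> \<le> s (\<sigma> n)" using cle[OF v, of "\<sigma> n"] by simp
      then show "\<bar>e n v\<bar> \<le> 1" unfolding e_def using sp
        by (simp add: abs_mult field_simps)
    qed
    then obtain \<rho> d where rd: "strict_mono \<rho>" "\<forall>v\<in>Bs. (\<lambda>n. e (\<rho> n) v) \<longlonglongrightarrow> d v"
      using BW_finite[OF fB] by blast
    define t where "t n = inverse (s (\<sigma> (\<rho> n)))" for n
    have tpos: "t n > 0" for n unfolding t_def using s1[of "\<sigma> (\<rho> n)"] by simp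
    have inv0: "(\<lambda>n. inverse (real (Suc (\<rho> n)))) \<longlonglongrightarrow> 0"
      using LIMSEQ_subseq_LIMSEQ[OF LIMSEQ_inverse_real_of_nat rd(1)] by (simp add: o_def)
    have t0: "t \<longlonglongrightarrow> 0"
    proof (rule tendsto_sandwich[of "\<lambda>n. 0" _ _ "\<lambda>n. inverse (real (Suc (\<rho> n)))"])
      show "\<forall>\<^sub>F n in sequentially. 0 \<le> t n" using tpos by (simp add: less_imp_le)
      show "\<forall>\<^sub>F n in sequentially. t n \<le> inverse (real (Suc (\<rho> n)))"
        unfolding t_def using sig by (simp add: le_imp_inverse_le)
    qed (rule tendsto_const, rule inv0)
    define W where "W = (\<Sum>v\<in>Bs. d v *\<^sub>R v)"
    have WM: "W \<in> M" unfolding W_def MB by (auto intro: span_sum span_scale span_base)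
    have e_rho: "e (\<rho> n) v = t n * c (\<sigma> (\<rho> n)) v" for n v unfolding e_def t_def by simp
    have "(\<lambda>n. \<Sum>v\<in>Bs. \<bar>e (\<rho> n) v\<bar>) \<longlonglongrightarrow> (\<Sum>v\<in>Bs. \<bar>d v\<bar>)"
      using rd(2) by (intro tendsto_sum tendsto_rabs) auto
    moreover have "(\<Sum>v\<in>Bs. \<bar>e (\<rho> n) v\<bar>) = 1 - t n" for n
    proof -
      have sp: "s (\<sigma> (\<rho> n)) > 0" using s1[of "\<sigma> (\<rho> n)"] by simp
      have "(\<Sum>v\<in>Bs. \<bar>e (\<rho> n) v\<bar>) = t n * (\<Sum>v\<in>Bs. \<bar>c (\<sigma> (\<rho> n)) v\<bar>)"
        unfolding e_rho using tpos[of n] by (simp add: abs_mult sum_distrib_left)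
      also have "\<dots> = t n * (s (\<sigma> (\<rho> n)) - 1)" unfolding s_def by simp
      also have "\<dots> = 1 - t n" unfolding t_def using sp by (simp add: field_simps)
      finally show ?thesis .
    qed
    moreover have "(\<lambda>n. 1 - t n) \<longlonglongrightarrow> 1" using tendsto_diff[OF tendsto_const t0, of 1] by simp
    ultimately have "(\<Sum>v\<in>Bs. \<bar>d v\<bar>) = 1" using LIMSEQ_unique by simp
    then obtain v0 where v0: "v0 \<in> Bs" "d v0 \<noteq> 0"
    proof -
      assume h: "(\<Sum>v\<in>Bs. \<bar>d v\<bar>) = 1" and th: "\<And>v0. v0 \<in> Bs \<Longrightarrow> d v0 \<noteq> 0 \<Longrightarrow> thesis"
      show thesis
      proof (rule ccontr)
        assume "\<not> thesis"
        then have "\<forall>v\<in>Bs. \<bar>d v\<bar> = 0" using th by auto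
        then have "(\<Sum>v\<in>Bs. \<bar>d v\<bar>) = 0" by simp
        then show False using h by simp
      qed
    qed
    have Wne: "W \<noteq> 0"
    proof
      assume "W = 0"
      then have "d v0 = 0" using independentD[OF Bs(2) fB order_refl _ v0(1)] unfolding W_def by blast
      then show False using v0 by simp
    qed
    have piW: "\<pi> W = (\<Sum>v\<in>Bs. d v * \<pi> v)"
      unfolding W_def using pi_sum[OF M_sub \<pi>_add \<pi>_scale fB BsM] by blast
    have eq1: "t n * \<pi> (Zs (\<sigma> (\<rho> n))) = (\<Sum>v\<in>Bs. e (\<rho> n) v * \<pi> v)" for n
      unfolding piZ e_rho by (simp add: sum_distrib_left mult.assoc)
    have "(\<lambda>n. t n * \<pi> (Zs (\<sigma> (\<rho> n)))) \<longlonglongrightarrow> \<pi> W"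
      unfolding eq1 piW using rd(2) by (intro tendsto_sum tendsto_mult tendsto_const) auto
    moreover have "(\<lambda>n. t n * \<pi> (Zs (\<sigma> (\<rho> n)))) \<longlonglongrightarrow> 0"
    proof (rule tendsto_sandwich[of "\<lambda>n. - ((\<bar>r\<bar> + 1) * t n)" _ _ "\<lambda>n. (\<bar>r\<bar> + 1) * t n"])
      have bd: "\<bar>\<pi> (Zs k)\<bar> \<le> \<bar>r\<bar> + 1" for k
      proof -
        have "inverse (real (Suc k)) \<le> 1" using le_imp_inverse_le[of 1 "real (Suc k)"] by simp
        then show ?thesis using Zlow[of k] Zs(3)[of k] by linarith
      qed
      have ab: "\<bar>t n * \<pi> (Zs (\<sigma> (\<rho> n)))\<bar> \<le> (\<bar>r\<bar> + 1) * t n" for n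
        using bd[of "\<sigma> (\<rho> n)"] tpos[of n] by (simp add: abs_mult mult.commute mult_left_mono)
      show "\<forall>\<^sub>F n in sequentially. - ((\<bar>r\<bar> + 1) * t n) \<le> t n * \<pi> (Zs (\<sigma> (\<rho> n)))"
      proof (intro always_eventually allI)
        fix n show "- ((\<bar>r\<bar> + 1) * t n) \<le> t n * \<pi> (Zs (\<sigma> (\<rho> n)))" using ab[of n] by arith
      qed
      show "\<forall>\<^sub>F n in sequentially. t n * \<pi> (Zs (\<sigma> (\<rho> n))) \<le> (\<bar>r\<bar> + 1) * t n"
      proof (intro always_eventually allI)
        fix n show "t n * \<pi> (Zs (\<sigma> (\<rho> n))) \<le> (\<bar>r\<bar> + 1) * t n" using ab[of n] by arith
      qed
      show "(\<lambda>n. - ((\<bar>r\<bar> + 1) * t n)) \<longlonglongrightarrow> 0"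
        using tendsto_minus[OF tendsto_mult[OF tendsto_const t0, of "\<bar>r\<bar> + 1"]] by simp
      show "(\<lambda>n. (\<bar>r\<bar> + 1) * t n) \<longlonglongrightarrow> 0"
        using tendsto_mult[OF tendsto_const t0, of "\<bar>r\<bar> + 1"] by simp
    qed
    ultimately have piW0: "\<pi> W = 0" using LIMSEQ_unique by blast
    have eq2: "t n *\<^sub>R (X + Zs (\<sigma> (\<rho> n))) = t n *\<^sub>R X + (\<Sum>v\<in>Bs. e (\<rho> n) v *\<^sub>R v)" for n
      unfolding c e_rho by (simp add: scaleR_right_distrib scaleR_sum_right)
    have lim: "(\<lambda>n. t n *\<^sub>R (X + Zs (\<sigma> (\<rho> n)))) \<longlonglongrightarrow> W"
    proof -
      have "(\<lambda>n. t n *\<^sub>R X + (\<Sum>v\<in>Bs. e (\<rho> n) v *\<^sub>R v)) \<longlonglongrightarrow> 0 *\<^sub>R X + W"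
      proof (rule tend_add[OF cadd])
        show "(\<lambda>n. t n *\<^sub>R X) \<longlonglongrightarrow> 0 *\<^sub>R X"
          by (rule tend_scale[OF csc t0 tendsto_const])
        have "\<forall>v\<in>Bs. (\<lambda>n. e (\<rho> n) v *\<^sub>R v) \<longlonglongrightarrow> d v *\<^sub>R v"
          using rd(2) tend_scale[OF csc _ tendsto_const] by blast
        then show "(\<lambda>n. \<Sum>v\<in>Bs. e (\<rho> n) v *\<^sub>R v) \<longlonglongrightarrow> W"
          unfolding W_def by (rule tend_sum[OF cadd fB])
      qed
      then show ?thesis unfolding eq2 by simp
    qed
    have cl: "W \<in> closure {l *\<^sub>R Y | l Y. l \<in> {0..\<epsilon>} \<and> Y \<in> A}" if ep: "\<epsilon> > 0" for \<epsilon> :: real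
    proof -
      have ev: "\<forall>\<^sub>F n in sequentially. t n < \<epsilon>" using order_tendstoD(2)[OF t0 ep] .
      have mem: "t n *\<^sub>R (X + Zs (\<sigma> (\<rho> n))) \<in> closure {l *\<^sub>R Y | l Y. l \<in> {0..\<epsilon>} \<and> Y \<in> A}"
        if tn: "t n < \<epsilon>" for n
      proof -
        have "t n \<in> {0..\<epsilon>}" using tn tpos[of n] by simp
        then have "t n *\<^sub>R (X + Zs (\<sigma> (\<rho> n))) \<in> {l *\<^sub>R Y | l Y. l \<in> {0..\<epsilon>} \<and> Y \<in> A}"
          using Zs(2)[of "\<sigma> (\<rho> n)"] by blast
        then show ?thesis by (rule subsetD[OF closure_subset])
      qed
      have ev2: "\<forall>\<^sub>F n in sequentially. t n *\<^sub>R (X + Zs (\<sigma> (\<rho> n)))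
              \<in> closure {l *\<^sub>R Y | l Y. l \<in> {0..\<epsilon>} \<and> Y \<in> A}"
        using ev by (rule eventually_mono) (rule mem)
      show ?thesis
        by (rule Lim_in_closed_set[OF closed_closure ev2 sequentially_bot lim])
    qed
    have "W \<in> asymptotic_cone A"
      unfolding asymptotic_cone_def using cl by simp
    then have "W \<in> asymptotic_cone A \<inter> {Z \<in> M. \<pi> Z = 0}" using WM piW0 by simp
    then have "W = 0" using no_sgd by blast
    then show ?thesis using Wne by simp
  qed
qed

end
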